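(* Let $m\ge2$. For $\beta\in(\mathcal{G}(m),\beta_f(m)]$ one has $|S_{\beta,m}|=1$ if $m$ is even and $|S_{\beta,m}|=2$ if $m$ is odd; and $|S_{\beta,m}|\ge\aleph_0$ for $\beta\in(\beta_f(m),m+1]$.
   Context: For $\beta\in(1,m+1]$ and $x\in[0,\frac{m}{\beta-1}]$, $\Sigma_{\beta,m}(x)=\{(\epsilon_i)\in\{0,\ldots,m\}^{\mathbb{N}}:\sum_{i\ge1}\epsilon_i\beta^{-i}=x\}$. $W_{\beta,m}=\{x\in(\frac{m+1-\beta}{\beta-1},1):|\Sigma_{\beta,m}(x)|=1\}$ and $S_{\beta,m}=\{(\epsilon_i)\in\{0,\ldots,m\}^{\mathbb{N}}:\sum_{i\ge1}\epsilon_i\beta^{-i}\in W_{\beta,m}\}$. $\mathcal{G}(m)=k+1$ if $m=2k$ and $\mathcal{G}(m)=\frac{k+1+\sqrt{k^2+6k+5}}{2}$ if $m=2k+1$. $\beta_f(m)=\frac{k+1+\sqrt{k^2+6k+1}}{2}$ if $m=2k$, and $\beta_f(m)$ is the largest real root of $x^3-(k+2)x^2+x-(k+1)=0$ if $m=2k+1$. *)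

theory Defs
  imports Complex_Main
begin

text \<open>Digit sequences in {0,...,m}^N. A sequence (eps_1, eps_2, ...) is represented as
  e :: nat => nat with e i = eps_(i+1); its value is sum_i e i * beta^-(i+1).\<close>

definition digit_seqs :: "nat \<Rightarrow> (nat \<Rightarrow> nat) set" where
  "digit_seqs m = {e. \<forall>i. e i \<le> m}"

definition beta_val :: "real \<Rightarrow> (nat \<Rightarrow> nat) \<Rightarrow> real" where
  "beta_val \<beta> e = (\<Sum>i. real (e i) / \<beta> ^ Suc i)"

definition Sigma_bm :: "real \<Rightarrow> nat \<Rightarrow> real \<Rightarrow> (nat \<Rightarrow> nat) set" where
  "Sigma_bm \<beta> m x = {e \<in> digit_seqs m. beta_val \<beta> e = x}"

definition W_bm :: "real \<Rightarrow> nat \<Rightarrow> real set" where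
  "W_bm \<beta> m = {x. (real m + 1 - \<beta>) / (\<beta> - 1) < x \<and> x < 1 \<and> card (Sigma_bm \<beta> m x) = 1}"

definition S_bm :: "real \<Rightarrow> nat \<Rightarrow> (nat \<Rightarrow> nat) set" where
  "S_bm \<beta> m = {e \<in> digit_seqs m. beta_val \<beta> e \<in> W_bm \<beta> m}"

definition G_m :: "nat \<Rightarrow> real" where
  "G_m m = (if even m then real (m div 2) + 1
            else (let k = real (m div 2) in (k + 1 + sqrt (k^2 + 6*k + 5)) / 2))"

definition beta_f :: "nat \<Rightarrow> real" where
  "beta_f m = (if even m then (let k = real (m div 2) in (k + 1 + sqrt (k^2 + 6*k + 1)) / 2)
               else (let k = real (m div 2) in
                      Max {x::real. x^3 - (k + 2) * x^2 + x - (k + 1) = 0}))"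

end

theory Submission
  imports Defs
begin

definition tv :: "real \<Rightarrow> (nat \<Rightarrow> nat) \<Rightarrow> nat \<Rightarrow> real" where
  "tv \<beta> e i = beta_val \<beta> (\<lambda>t. e (i + t))"

lemma summable_bv:
  assumes b: "1 < \<beta>" and e: "e \<in> digit_seqs m"
  shows "summable (\<lambda>i. real (e i) / \<beta> ^ Suc i)"
proof -
  have g: "summable (\<lambda>i. real m / \<beta> * (1/\<beta>) ^ i)"
    using b by (intro summable_mult summable_geometric) auto
  show ?thesis
  proof (rule summable_comparison_test'[OF g])
    fix n
    have "e n \<le> m" using e by (auto simp: digit_seqs_def)
    then show "norm (real (e n) / \<beta> ^ Suc n) \<le> real m / \<beta> * (1 / \<beta>) ^ n"
      using b by (auto simp: power_one_over divide_right_mono field_simps)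
  qed
qed

lemma bv_bounds:
  assumes b: "1 < \<beta>" and e: "e \<in> digit_seqs m"
  shows "0 \<le> beta_val \<beta> e" "beta_val \<beta> e \<le> real m / (\<beta> - 1)"
proof -
  show "0 \<le> beta_val \<beta> e" unfolding beta_val_def
    using summable_bv[OF b e] b by (intro suminf_nonneg) auto
  have g: "summable (\<lambda>i. real m / \<beta> * (1/\<beta>) ^ i)"
    using b by (intro summable_mult summable_geometric) auto
  have gs: "(\<Sum>i. real m / \<beta> * (1/\<beta>) ^ i) = real m / (\<beta> - 1)"
  proof -
    have "(\<Sum>i. real m / \<beta> * (1/\<beta>) ^ i) = real m / \<beta> * (\<Sum>i. (1/\<beta>) ^ i)"
      using b by (intro suminf_mult summable_geometric) auto
    also have "\<dots> = real m / \<beta> * (1 / (1 - 1/\<beta>))"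
      using b by (subst suminf_geometric) auto
    also have "\<dots> = real m / (\<beta> - 1)" using b by (simp add: field_simps)
    finally show ?thesis .
  qed
  have "beta_val \<beta> e \<le> (\<Sum>i. real m / \<beta> * (1/\<beta>) ^ i)" unfolding beta_val_def
  proof (rule suminf_le[OF _ summable_bv[OF b e] g])
    fix n
    have "e n \<le> m" using e by (auto simp: digit_seqs_def)
    then show "real (e n) / \<beta> ^ Suc n \<le> real m / \<beta> * (1 / \<beta>) ^ n"
      using b by (auto simp: power_one_over divide_right_mono field_simps)
  qed
  then show "beta_val \<beta> e \<le> real m / (\<beta> - 1)" using gs by simp
qed

lemma bv_rec:
  assumes b: "1 < \<beta>" and e: "e \<in> digit_seqs m"
  shows "beta_val \<beta> e = (real (e 0) + beta_val \<beta> (\<lambda>i. e (Suc i))) / \<beta>"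
proof -
  have s: "summable (\<lambda>i. real (e i) / \<beta> ^ Suc i)" by (rule summable_bv[OF b e])
  have "(\<Sum>i. real (e (Suc i)) / \<beta> ^ Suc (Suc i)) = beta_val \<beta> e - real (e 0) / \<beta>"
    using suminf_split_head[OF s] by (simp add: beta_val_def)
  moreover have "(\<Sum>i. real (e (Suc i)) / \<beta> ^ Suc (Suc i)) = beta_val \<beta> (\<lambda>i. e (Suc i)) / \<beta>"
  proof -
    have s2: "summable (\<lambda>i. real (e (Suc i)) / \<beta> ^ Suc i)"
      by (rule summable_bv[OF b]) (use e in \<open>auto simp: digit_seqs_def\<close>)
    have "(\<Sum>i. real (e (Suc i)) / \<beta> ^ Suc (Suc i)) = (\<Sum>i. real (e (Suc i)) / \<beta> ^ Suc i / \<beta>)"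
      by (simp add: field_simps)
    also have "\<dots> = beta_val \<beta> (\<lambda>i. e (Suc i)) / \<beta>"
      unfolding beta_val_def by (rule suminf_divide[OF s2])
    finally show ?thesis .
  qed
  ultimately show ?thesis using b by (simp add: field_simps)
qed

lemma shift_digits: "e \<in> digit_seqs m \<Longrightarrow> (\<lambda>t. e (i + t)) \<in> digit_seqs m"
  by (auto simp: digit_seqs_def)

lemma tv0: "tv \<beta> e 0 = beta_val \<beta> e" by (simp add: tv_def)

lemma tv_rec:
  assumes b: "1 < \<beta>" and e: "e \<in> digit_seqs m"
  shows "tv \<beta> e i = (real (e i) + tv \<beta> e (Suc i)) / \<beta>"
  using bv_rec[OF b shift_digits[OF e, of i]] by (simp add: tv_def)

lemma tv_bounds:
  assumes b: "1 < \<beta>" and e: "e \<in> digit_seqs m"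
  shows "0 \<le> tv \<beta> e i" "tv \<beta> e i \<le> real m / (\<beta> - 1)"
  using bv_bounds[OF b shift_digits[OF e, of i]] by (auto simp: tv_def)

lemma val_eq:
  assumes b: "1 < \<beta>" and e: "e \<in> digit_seqs m"
    and cb: "\<And>i. \<bar>c i\<bar> \<le> B"
    and cr: "\<And>i. c i = (real (e i) + c (Suc i)) / \<beta>"
  shows "tv \<beta> e i = c i"
proof (rule ccontr)
  assume ne: "tv \<beta> e i \<noteq> c i"
  define d where "d j = tv \<beta> e j - c j" for j
  have dr: "d j = d (Suc j) / \<beta>" for j
    unfolding d_def using tv_rec[OF b e, of j] cr[of j] b by (simp add: field_simps)
  have dN: "d i * \<beta> ^ N = d (i + N)" for N
  proof (induction N)
    case 0 then show ?case by simp
  next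
    case (Suc N)
    have "d i * \<beta> ^ Suc N = d (i + N) * \<beta>" using Suc by (simp add: field_simps)
    also have "\<dots> = d (i + Suc N)" using dr[of "i+N"] b by (simp add: field_simps)
    finally show ?case .
  qed
  define C where "C = real m / (\<beta> - 1) + B"
  have dB: "\<bar>d j\<bar> \<le> C" for j
    using tv_bounds[OF b e, of j] cb[of j] unfolding d_def C_def by linarith
  have "0 < \<bar>d i\<bar>" using ne by (simp add: d_def)
  obtain N where N: "C / \<bar>d i\<bar> < \<beta> ^ N" using real_arch_pow[OF b] by blast
  then have "C < \<bar>d i\<bar> * \<beta> ^ N" using \<open>0 < \<bar>d i\<bar>\<close> by (simp add: field_simps)
  also have "\<dots> = \<bar>d (i + N)\<bar>"
  proof -
    have "\<bar>d (i + N)\<bar> = \<bar>d i\<bar> * \<bar>\<beta> ^ N\<bar>" by (simp only: dN[symmetric] abs_mult)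
    then show ?thesis using b by simp
  qed
  finally show False using dB[of "i+N"] by simp
qed

lemma greedy_exists:
  assumes b: "1 < \<beta>" and bm: "\<beta> \<le> real m + 1"
    and y0: "0 \<le> y" and y1: "y \<le> real m / (\<beta> - 1)"
  shows "\<exists>g \<in> digit_seqs m. beta_val \<beta> g = y"
proof -
  define M where "M = real m / (\<beta> - 1)"
  have M1: "1 \<le> M" using b bm unfolding M_def by (simp add: field_simps)
  have bM: "\<beta> * M - real m = M" using b unfolding M_def by (simp add: field_simps)
  define dg where "dg x = min m (nat \<lfloor>\<beta> * x\<rfloor>)" for x
  define r where "r = rec_nat y (\<lambda>_ x. \<beta> * x - real (dg x))"
  have r0: "r 0 = y" by (simp add: r_def)
  have rS: "r (Suc n) = \<beta> * r n - real (dg (r n))" for n by (simp add: r_def)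
  have step: "0 \<le> \<beta> * x - real (dg x) \<and> \<beta> * x - real (dg x) \<le> M" if "0 \<le> x" "x \<le> M" for x
  proof (cases "nat \<lfloor>\<beta> * x\<rfloor> \<le> m")
    case True
    have bx: "0 \<le> \<beta> * x" using that b by simp
    have "dg x = nat \<lfloor>\<beta> * x\<rfloor>" using True by (simp add: dg_def)
    moreover have "real (nat \<lfloor>\<beta> * x\<rfloor>) = of_int \<lfloor>\<beta> * x\<rfloor>" using bx by simp
    ultimately show ?thesis using M1 by linarith
  next
    case False
    have "dg x = m" using False by (simp add: dg_def)
    moreover have "real m + 1 \<le> \<beta> * x" using False by linarith
    moreover have "\<beta> * x \<le> \<beta> * M" using that b by simp
    ultimately show ?thesis using bM by linarith
  qed
  have rb: "0 \<le> r n \<and> r n \<le> M" for n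
  proof (induction n)
    case 0 then show ?case using y0 y1 r0 by (simp add: M_def)
  next
    case (Suc n) then show ?case using step[of "r n"] rS[of n] by simp
  qed
  define g where "g n = dg (r n)" for n
  have g: "g \<in> digit_seqs m" by (simp add: digit_seqs_def g_def dg_def)
  have "tv \<beta> g 0 = r 0"
  proof (rule val_eq[OF b g])
    show "\<bar>r i\<bar> \<le> M" for i using rb[of i] by simp
    show "r i = (real (g i) + r (Suc i)) / \<beta>" for i
      using rS[of i] b by (simp add: g_def field_simps)
  qed
  then show ?thesis using g r0 tv0 by metis
qed

lemma prefix_tail:
  assumes b: "1 < \<beta>" and e: "e \<in> digit_seqs m" and e': "e' \<in> digit_seqs m"
    and p: "\<forall>t<i. e t = e' t" and v: "tv \<beta> e i = tv \<beta> e' i"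
  shows "beta_val \<beta> e = beta_val \<beta> e'"
  using e e' p v
proof (induction i arbitrary: e e')
  case 0 then show ?case by (simp add: tv0)
next
  case (Suc i)
  let ?s = "\<lambda>t. e (Suc t)" and ?s' = "\<lambda>t. e' (Suc t)"
  have "beta_val \<beta> ?s = beta_val \<beta> ?s'"
  proof (rule Suc.IH)
    show "?s \<in> digit_seqs m" "?s' \<in> digit_seqs m" using Suc.prems by (auto simp: digit_seqs_def)
    show "\<forall>t<i. ?s t = ?s' t" using Suc.prems by auto
    show "tv \<beta> ?s i = tv \<beta> ?s' i" using Suc.prems(4) by (simp add: tv_def)
  qed
  moreover have "e 0 = e' 0" using Suc.prems by auto
  ultimately show ?case using bv_rec[OF b Suc.prems(1)] bv_rec[OF b Suc.prems(2)] by simp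
qed

lemma prefix_val:
  assumes b: "1 < \<beta>" and e: "e \<in> digit_seqs m" and e': "e' \<in> digit_seqs m"
    and p: "\<forall>t<i. e t = e' t" and v: "beta_val \<beta> e = beta_val \<beta> e'"
  shows "tv \<beta> e i = tv \<beta> e' i"
  using e e' p v
proof (induction i arbitrary: e e')
  case 0 then show ?case by (simp add: tv0)
next
  case (Suc i)
  let ?s = "\<lambda>t. e (Suc t)" and ?s' = "\<lambda>t. e' (Suc t)"
  have "e 0 = e' 0" using Suc.prems by auto
  then have "beta_val \<beta> ?s = beta_val \<beta> ?s'"
    using bv_rec[OF b Suc.prems(1)] bv_rec[OF b Suc.prems(2)] Suc.prems(4) b by (simp add: field_simps)
  then have "tv \<beta> ?s i = tv \<beta> ?s' i"
    by (intro Suc.IH) (use Suc.prems in \<open>auto simp: digit_seqs_def\<close>)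
  then show ?case by (simp add: tv_def)
qed

definition inJ :: "real \<Rightarrow> nat \<Rightarrow> real \<Rightarrow> bool" where
  "inJ \<beta> m x \<longleftrightarrow> (real m + 1 - \<beta>) / (\<beta> - 1) < x \<and> x < 1"

lemma S_char:
  assumes b: "1 < \<beta>" and bm: "\<beta> \<le> real m + 1"
  shows "e \<in> S_bm \<beta> m \<longleftrightarrow> e \<in> digit_seqs m \<and> (\<forall>i. inJ \<beta> m (tv \<beta> e i))"
proof -
  define L where "L = (real m + 1 - \<beta>) / (\<beta> - 1)"
  have LM: "L + 1 = real m / (\<beta> - 1)" using b unfolding L_def by (simp add: field_simps)
  have L0: "0 \<le> L" using b bm unfolding L_def by simp
  show ?thesis
  proof
    assume eS: "e \<in> S_bm \<beta> m"
    then have e: "e \<in> digit_seqs m" and W: "beta_val \<beta> e \<in> W_bm \<beta> m" by (auto simp: S_bm_def)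
    from W have c1: "card (Sigma_bm \<beta> m (beta_val \<beta> e)) = 1" and J0: "inJ \<beta> m (beta_val \<beta> e)"
      by (auto simp: W_bm_def inJ_def)
    have uniq: "e' = e" if "e' \<in> digit_seqs m" "beta_val \<beta> e' = beta_val \<beta> e" for e'
    proof -
      obtain a where "Sigma_bm \<beta> m (beta_val \<beta> e) = {a}" using c1 card_1_singletonE by blast
      moreover have "e \<in> Sigma_bm \<beta> m (beta_val \<beta> e)" "e' \<in> Sigma_bm \<beta> m (beta_val \<beta> e)"
        using e that by (auto simp: Sigma_bm_def)
      ultimately show ?thesis by auto
    qed
    have "inJ \<beta> m (tv \<beta> e i)" for i
    proof (induction i)
      case 0 then show ?case using J0 by (simp add: tv0)
    next
      case (Suc i)
      define t where "t = tv \<beta> e i"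
      define t' where "t' = tv \<beta> e (Suc i)"
      have rec: "\<beta> * t = real (e i) + t'" using tv_rec[OF b e, of i] b unfolding t_def t'_def
        by (simp add: field_simps)
      have tJ: "L < t" "t < 1" using Suc unfolding inJ_def t_def L_def by auto
      have t'b: "0 \<le> t'" "t' \<le> L + 1" using tv_bounds[OF b e, of "Suc i"] LM unfolding t'_def by auto
      have eim: "e i \<le> m" using e by (auto simp: digit_seqs_def)
      have A: "t' < 1"
      proof (rule ccontr)
        assume "\<not> t' < 1"
        then have t'1: "1 \<le> t'" by simp
        have "e i \<noteq> m"
        proof
          assume "e i = m"
          have "\<beta> * t < \<beta>" using tJ b by simp
          then show False using rec \<open>e i = m\<close> bm t'1 by simp
        qed
        with eim have lt: "e i < m" by simp
        obtain g where g: "g \<in> digit_seqs m" "beta_val \<beta> g = t' - 1"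
          using greedy_exists[OF b bm, of "t' - 1"] t'1 t'b LM by auto
        define e'' where "e'' j = (if j < i then e j else if j = i then e i + 1 else g (j - Suc i))" for j
        have e'': "e'' \<in> digit_seqs m"
          using e g lt by (auto simp: digit_seqs_def e''_def)
        have "tv \<beta> e'' (Suc i) = t' - 1"
        proof -
          have "(\<lambda>t. e'' (Suc i + t)) = g" by (auto simp: e''_def)
          then show ?thesis using g by (simp add: tv_def)
        qed
        then have "\<beta> * tv \<beta> e'' i = \<beta> * t"
          using tv_rec[OF b e'', of i] rec b by (simp add: e''_def field_simps)
        then have "tv \<beta> e'' i = t" using b by simp
        then have "beta_val \<beta> e'' = beta_val \<beta> e"
          by (intro prefix_tail[OF b e'' e, of i]) (auto simp: e''_def t_def)
        then have "e'' = e" using uniq e'' by blast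
        moreover have "e'' i = e i + 1" by (simp add: e''_def)
        ultimately show False by simp
      qed
      have B: "L < t'"
      proof (rule ccontr)
        assume "\<not> L < t'"
        then have t'L: "t' \<le> L" by simp
        have "e i \<noteq> 0"
        proof
          assume "e i = 0"
          have "t < \<beta> * t" using tJ L0 b by simp
          then show False using rec \<open>e i = 0\<close> t'L tJ by simp
        qed
        then have gt: "0 < e i" by simp
        obtain g where g: "g \<in> digit_seqs m" "beta_val \<beta> g = t' + 1"
          using greedy_exists[OF b bm, of "t' + 1"] t'L t'b LM by auto
        define e'' where "e'' j = (if j < i then e j else if j = i then e i - 1 else g (j - Suc i))" for j
        have e'': "e'' \<in> digit_seqs m"
          using e g gt by (auto simp: digit_seqs_def e''_def le_diff_conv2 intro: le_trans[OF diff_le_self])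
        have "tv \<beta> e'' (Suc i) = t' + 1"
        proof -
          have "(\<lambda>t. e'' (Suc i + t)) = g" by (auto simp: e''_def)
          then show ?thesis using g by (simp add: tv_def)
        qed
        then have "\<beta> * tv \<beta> e'' i = \<beta> * t"
          using tv_rec[OF b e'', of i] rec b gt by (simp add: e''_def field_simps of_nat_diff)
        then have "tv \<beta> e'' i = t" using b by simp
        then have "beta_val \<beta> e'' = beta_val \<beta> e"
          by (intro prefix_tail[OF b e'' e, of i]) (auto simp: e''_def t_def)
        then have "e'' = e" using uniq e'' by blast
        moreover have "e'' i = e i - 1" by (simp add: e''_def)
        ultimately show False using gt by simp
      qed
      show ?case using A B unfolding inJ_def L_def t'_def by simp
    qed
    then show "e \<in> digit_seqs m \<and> (\<forall>i. inJ \<beta> m (tv \<beta> e i))" using e by blast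
  next
    assume "e \<in> digit_seqs m \<and> (\<forall>i. inJ \<beta> m (tv \<beta> e i))"
    then have e: "e \<in> digit_seqs m" and J: "\<And>i. inJ \<beta> m (tv \<beta> e i)" by auto
    have "Sigma_bm \<beta> m (beta_val \<beta> e) = {e}"
    proof (rule ccontr)
      assume "Sigma_bm \<beta> m (beta_val \<beta> e) \<noteq> {e}"
      moreover have "e \<in> Sigma_bm \<beta> m (beta_val \<beta> e)" using e by (simp add: Sigma_bm_def)
      ultimately obtain e' where e': "e' \<in> digit_seqs m" "beta_val \<beta> e' = beta_val \<beta> e" "e' \<noteq> e"
        by (auto simp: Sigma_bm_def)
      then obtain j where "e' j \<noteq> e j" by auto
      define n where "n = (LEAST j. e' j \<noteq> e j)"
      have nd: "e' n \<noteq> e n" unfolding n_def by (rule LeastI) fact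
      have pre: "\<forall>t<n. e t = e' t" unfolding n_def using not_less_Least by fastforce
      have "tv \<beta> e n = tv \<beta> e' n" using prefix_val[OF b e e'(1) pre] e'(2) by simp
      then have eq: "real (e n) + tv \<beta> e (Suc n) = real (e' n) + tv \<beta> e' (Suc n)"
        using tv_rec[OF b e, of n] tv_rec[OF b e'(1), of n] b by (simp add: field_simps)
      have Jn: "L < tv \<beta> e (Suc n)" "tv \<beta> e (Suc n) < 1" using J[of "Suc n"] by (auto simp: inJ_def L_def)
      have bd: "0 \<le> tv \<beta> e' (Suc n)" "tv \<beta> e' (Suc n) \<le> L + 1" using tv_bounds[OF b e'(1)] LM by auto
      show False
      proof (cases "e n < e' n")
        case True
        then have "real (e n) + 1 \<le> real (e' n)" by linarith
        then show False using eq Jn bd by linarith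
      next
        case False
        then have "real (e' n) + 1 \<le> real (e n)" using nd by linarith
        then show False using eq Jn bd by linarith
      qed
    qed
    then have "beta_val \<beta> e \<in> W_bm \<beta> m" using J[of 0] by (simp add: W_bm_def inJ_def tv0)
    then show "e \<in> S_bm \<beta> m" using e by (simp add: S_bm_def)
  qed
qed

lemma rec_from_y:
  assumes b: "1 < \<beta>" and h: "\<beta> * y + (real m / 2 - d) = y'"
  shows "real m / (\<beta> - 1) / 2 + y = (d + (real m / (\<beta> - 1) / 2 + y')) / \<beta>"
proof -
  define M where "M = real m / (\<beta> - 1)"
  have M: "\<beta> * M = M + real m" using b unfolding M_def by (simp add: field_simps)
  have "\<beta> * (M / 2 + y) = \<beta> * y + (\<beta> * M) / 2" by (simp add: algebra_simps)
  then have "\<beta> * (M / 2 + y) = d + (M / 2 + y')" using h M by linarith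
  then show ?thesis using b unfolding M_def[symmetric] by (simp add: field_simps)
qed

lemma lin1: fixes L M y :: real shows "L = M - 1 \<Longrightarrow> \<bar>y\<bar> < 1 - M/2 \<Longrightarrow> L < M/2 + y \<and> M/2 + y < 1"
  by (simp add: abs_less_iff)
lemma lin2: fixes L M t :: real shows "L = M - 1 \<Longrightarrow> L < t \<and> t < 1 \<Longrightarrow> \<bar>t - M/2\<bar> < 1 - M/2"
  by (simp add: abs_less_iff)

lemma inJ_from_y:
  assumes b: "1 < \<beta>" and h: "\<bar>y\<bar> < 1 - real m / (\<beta> - 1) / 2"
  shows "inJ \<beta> m (real m / (\<beta> - 1) / 2 + y)"
proof -
  have "(real m + 1 - \<beta>) / (\<beta> - 1) = real m / (\<beta> - 1) - 1" using b by (simp add: field_simps)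
  then show ?thesis using h unfolding inJ_def by (intro lin1) auto
qed

lemma y_from_inJ:
  assumes b: "1 < \<beta>" and h: "inJ \<beta> m t"
  shows "\<bar>t - real m / (\<beta> - 1) / 2\<bar> < 1 - real m / (\<beta> - 1) / 2"
proof -
  have "(real m + 1 - \<beta>) / (\<beta> - 1) = real m / (\<beta> - 1) - 1" using b by (simp add: field_simps)
  then show ?thesis using h unfolding inJ_def by (intro lin2) auto
qed

lemma yrec:
  assumes b: "1 < \<beta>" and h: "t = (d + t') / \<beta>"
  shows "t' - real m / (\<beta> - 1) / 2 = \<beta> * (t - real m / (\<beta> - 1) / 2) + (real m / 2 - d)"
proof -
  define M where "M = real m / (\<beta> - 1)"
  have M: "\<beta> * M = M + real m" using b unfolding M_def by (simp add: field_simps)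
  have "\<beta> * t = d + t'" using h b by (simp add: field_simps)
  then show ?thesis using M unfolding M_def[symmetric] by (simp add: algebra_simps)
qed

lemma sign_lemma:
  fixes a b :: real assumes "0 < a" shows "a * b \<le> 0 \<longleftrightarrow> b \<le> 0" "0 < a * b \<longleftrightarrow> 0 < b"
  using assms by (auto simp: mult_le_0_iff zero_less_mult_iff)

lemma even_H:
  fixes \<beta> k H :: real
  assumes b: "1 < \<beta>" and H: "H = 1 - 2*k / (\<beta> - 1) / 2"
  shows "(\<beta> - 1) * ((\<beta>+1)*H - 1) = \<beta>^2 - (k+1)*\<beta> - k"
proof -
  have "H * (\<beta> - 1) = \<beta> - 1 - k" using b H by (simp add: field_simps)
  then have "(\<beta> - 1) * ((\<beta>+1)*H - 1) = (\<beta>+1) * (H * (\<beta> - 1)) - (\<beta> - 1)"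
    by (simp add: algebra_simps)
  also have "\<dots> = (\<beta>+1) * (\<beta> - 1 - k) - (\<beta> - 1)" using \<open>H * (\<beta> - 1) = \<beta> - 1 - k\<close> by simp
  also have "\<dots> = \<beta>^2 - (k+1)*\<beta> - k" by (simp add: algebra_simps power2_eq_square)
  finally show ?thesis .
qed

lemma odd_H:
  fixes \<beta> k H :: real
  assumes b: "1 < \<beta>" and H: "H = 1 - (2*k+1) / (\<beta> - 1) / 2"
  shows "2 * H * (\<beta> - 1) = 2*\<beta> - 2*k - 3"
    "2 * (\<beta>^3 - (k+2)*\<beta>^2 + \<beta> - (k+1)) = (\<beta> - 1) * (2*H*(\<beta>^2+1) - (\<beta>+1))"
proof -
  show h: "2 * H * (\<beta> - 1) = 2*\<beta> - 2*k - 3" using b H by (simp add: field_simps)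
  have "(\<beta> - 1) * (2*H*(\<beta>^2+1) - (\<beta>+1)) = (2 * H * (\<beta> - 1)) * (\<beta>^2+1) - (\<beta>-1)*(\<beta>+1)"
    by (simp add: algebra_simps)
  also have "\<dots> = (2*\<beta> - 2*k - 3) * (\<beta>^2+1) - (\<beta>-1)*(\<beta>+1)" by (simp only: h)
  also have "\<dots> = 2 * (\<beta>^3 - (k+2)*\<beta>^2 + \<beta> - (k+1))"
    by (simp add: algebra_simps power2_eq_square power3_eq_cube)
  finally show "2 * (\<beta>^3 - (k+2)*\<beta>^2 + \<beta> - (k+1)) = (\<beta> - 1) * (2*H*(\<beta>^2+1) - (\<beta>+1))" ..
qed

lemma g_le: fixes c X :: real shows "2*c = X \<Longrightarrow> c \<le> 0 \<Longrightarrow> X \<le> 0" by simp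
lemma g_lt: fixes c X :: real shows "2*c = X \<Longrightarrow> 0 < c \<Longrightarrow> 0 < X" by simp
lemma g_abs: fixes a y Y :: real shows "\<bar>y\<bar> \<le> Y \<Longrightarrow> \<bar>a + y\<bar> \<le> \<bar>a\<bar> + Y" by simp
lemma g_O3: fixes A H X Y :: real shows "A + H = (X - Y)/2 \<Longrightarrow> X \<le> Y \<Longrightarrow> A \<le> -H" by simp
lemma g_O1: fixes Z X W :: real shows "Z = X - W \<Longrightarrow> X \<le> 0 \<Longrightarrow> 0 \<le> W \<Longrightarrow> Z \<le> 0" by simp

lemma mem_S_from_y:
  assumes b: "1 < \<beta>" and bm: "\<beta> \<le> real m + 1" and e: "e \<in> digit_seqs m"
    and yb: "\<And>i. \<bar>y i\<bar> \<le> YB" and YB: "YB < 1 - real m / (\<beta> - 1) / 2"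
    and yr: "\<And>i. \<beta> * y i + (real m / 2 - real (e i)) = y (Suc i)"
  shows "e \<in> S_bm \<beta> m"
proof -
  define c where "c i = real m / (\<beta> - 1) / 2 + y i" for i
  have tc: "tv \<beta> e i = c i" for i
  proof (rule val_eq[OF b e])
    show "\<bar>c i\<bar> \<le> \<bar>real m / (\<beta> - 1) / 2\<bar> + YB" for i
      unfolding c_def by (rule g_abs[OF yb])
    show "c i = (real (e i) + c (Suc i)) / \<beta>" for i
      unfolding c_def by (rule rec_from_y[OF b yr])
  qed
  have "inJ \<beta> m (tv \<beta> e i)" for i
    unfolding tc c_def by (rule inJ_from_y[OF b]) (use yb[of i] YB in linarith)
  then show ?thesis using S_char[OF b bm] e by blast
qed

lemma S_to_y:
  assumes b: "1 < \<beta>" and bm: "\<beta> \<le> real m + 1" and eS: "e \<in> S_bm \<beta> m"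
  shows "e \<in> digit_seqs m"
    "\<bar>tv \<beta> e i - real m / (\<beta> - 1) / 2\<bar> < 1 - real m / (\<beta> - 1) / 2"
    "tv \<beta> e (Suc i) - real m / (\<beta> - 1) / 2 = \<beta> * (tv \<beta> e i - real m / (\<beta> - 1) / 2) + (real m / 2 - real (e i))"
proof -
  have e: "e \<in> digit_seqs m" and J: "\<And>i. inJ \<beta> m (tv \<beta> e i)" using S_char[OF b bm] eS by auto
  show "e \<in> digit_seqs m" by fact
  show "\<bar>tv \<beta> e i - real m / (\<beta> - 1) / 2\<bar> < 1 - real m / (\<beta> - 1) / 2" by (rule y_from_inJ[OF b J])
  show "tv \<beta> e (Suc i) - real m / (\<beta> - 1) / 2 = \<beta> * (tv \<beta> e i - real m / (\<beta> - 1) / 2) + (real m / 2 - real (e i))"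
    by (rule yrec[OF b tv_rec[OF b e]])
qed

lemma E1:
  fixes \<beta> k H :: real
  assumes b: "1 < \<beta>" and H: "H = 1 - 2*k / (\<beta> - 1) / 2" and q: "\<beta>^2 - (k+1)*\<beta> - k \<le> 0"
  shows "(\<beta>+1)*H \<le> 1"
proof -
  have "(\<beta> - 1) * ((\<beta>+1)*H - 1) \<le> 0" using even_H[OF b H] q by simp
  then show ?thesis using sign_lemma(1)[of "\<beta> - 1" "(\<beta>+1)*H - 1"] b by simp
qed

lemma E2:
  fixes \<beta> k H :: real
  assumes b: "1 < \<beta>" and H: "H = 1 - 2*k / (\<beta> - 1) / 2" and q: "\<beta>^2 - (k+1)*\<beta> - k > 0"
  shows "1 / (\<beta>+1) < H"
proof -
  have "0 < (\<beta> - 1) * ((\<beta>+1)*H - 1)" using even_H[OF b H] q by simp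
  then have "1 < (\<beta>+1)*H" using sign_lemma(2)[of "\<beta> - 1" "(\<beta>+1)*H - 1"] b by simp
  then show ?thesis using b by (simp add: field_simps)
qed

lemma K1:
  fixes \<beta> k H :: real
  assumes b: "1 < \<beta>" and H: "H = 1 - (2*k+1) / (\<beta> - 1) / 2"
    and c: "\<beta>^3 - (k+2)*\<beta>^2 + \<beta> - (k+1) \<le> 0"
  shows "2*H*(\<beta>^2+1) \<le> \<beta>+1"
proof -
  have "(\<beta> - 1) * (2*H*(\<beta>^2+1) - (\<beta>+1)) \<le> 0" by (rule g_le[OF odd_H(2)[OF b H] c])
  then show ?thesis using sign_lemma(1)[of "\<beta> - 1" "2*H*(\<beta>^2+1) - (\<beta>+1)"] b by simp
qed

lemma K2:
  fixes \<beta> k H :: real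
  assumes b: "1 < \<beta>" and H: "H = 1 - (2*k+1) / (\<beta> - 1) / 2"
    and c: "\<beta>^3 - (k+2)*\<beta>^2 + \<beta> - (k+1) > 0"
  shows "2*H*(\<beta>^2+1) > \<beta>+1"
proof -
  have "0 < (\<beta> - 1) * (2*H*(\<beta>^2+1) - (\<beta>+1))" by (rule g_lt[OF odd_H(2)[OF b H] c])
  then show ?thesis using sign_lemma(2)[of "\<beta> - 1" "2*H*(\<beta>^2+1) - (\<beta>+1)"] b by simp
qed

lemma O1:
  fixes \<beta> H :: real
  assumes b: "1 < \<beta>" and K: "2*H*(\<beta>^2+1) \<le> \<beta>+1"
  shows "(\<beta>+1)*H \<le> 1"
proof -
  have id: "2*(\<beta>^2+1)*((\<beta>+1)*H - 1) = (\<beta>+1)*(2*H*(\<beta>^2+1) - (\<beta>+1)) - (\<beta>-1)^2"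
    by (simp add: algebra_simps power2_eq_square)
  have "(\<beta>+1)*(2*H*(\<beta>^2+1) - (\<beta>+1)) \<le> 0"
    using K b by (intro mult_nonneg_nonpos) auto
  then have "2*(\<beta>^2+1)*((\<beta>+1)*H - 1) \<le> 0" by (rule g_O1[OF id]) simp
  moreover have "0 < 2*(\<beta>^2+1)" by (simp add: add_pos_nonneg add_nonneg_pos)
  ultimately show ?thesis using sign_lemma(1)[of "2*(\<beta>^2+1)" "(\<beta>+1)*H - 1"] by simp
qed

lemma O2:
  fixes \<beta> k H :: real
  assumes b: "1 < \<beta>" and H: "H = 1 - (2*k+1) / (\<beta> - 1) / 2" and bk: "\<beta> \<le> 2*k+2"
  shows "H \<le> 1/2"
proof -
  have "(\<beta> - 1) * (2*H - 1) \<le> 0" using odd_H(1)[OF b H] bk by (simp add: algebra_simps)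
  then have "2*H - 1 \<le> 0" using sign_lemma(1)[of "\<beta> - 1" "2*H - 1"] b by simp
  then show ?thesis by simp
qed

lemma O3:
  fixes \<beta> H :: real
  assumes K: "2*H*(\<beta>^2+1) \<le> \<beta>+1"
  shows "\<beta> * (\<beta> * H - 1/2) - 1/2 \<le> - H"
proof -
  have "\<beta> * (\<beta> * H - 1/2) - 1/2 + H = (2*H*(\<beta>^2+1) - (\<beta>+1))/2"
    by (simp add: algebra_simps power2_eq_square)
  then show ?thesis using K by (rule g_O3)
qed

lemma O4:
  fixes \<beta> k H :: real
  assumes b: "1 < \<beta>" and H: "H = 1 - (2*k+1) / (\<beta> - 1) / 2" and q: "\<beta>^2 - (k+1)*\<beta> - (k+1) > 0"
  shows "1 / (2*(\<beta>+1)) < H"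
proof -
  have h: "2 * H * (\<beta> - 1) = 2*\<beta> - 2*k - 3" by (rule odd_H(1)[OF b H])
  have "(\<beta> - 1) * (2*H*(\<beta>+1) - 1) = (2 * H * (\<beta> - 1)) * (\<beta>+1) - (\<beta> - 1)" by (simp add: algebra_simps)
  also have "\<dots> = 2*(\<beta>^2 - (k+1)*\<beta> - (k+1))" unfolding h by (simp add: algebra_simps power2_eq_square)
  finally have "0 < (\<beta> - 1) * (2*H*(\<beta>+1) - 1)" using q by simp
  then have "1 < 2*H*(\<beta>+1)" using sign_lemma(2)[of "\<beta> - 1" "2*H*(\<beta>+1) - 1"] b by simp
  then show ?thesis using b by (simp add: field_simps)
qed

lemma O5:
  fixes \<beta> H :: real
  assumes K: "2*H*(\<beta>^2+1) > \<beta>+1"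
  shows "(1+\<beta>) / (2*(1+\<beta>^2)) < H"
proof -
  have "0 < 2*(1+\<beta>^2)" by (simp add: add_pos_nonneg)
  then show ?thesis using K by (simp add: divide_less_eq algebra_simps)
qed

lemma g_pos: fixes Q A B :: real shows "Q = A + B \<Longrightarrow> 0 \<le> A \<Longrightarrow> 0 < B \<Longrightarrow> 0 < Q" by simp

lemma g_half: fixes x :: real shows "x < 2 \<Longrightarrow> 0 < 1 - x/2" by simp

lemma step_bound:
  fixes Y Y' H \<beta> s :: real
  assumes "\<bar>Y\<bar> < H" "\<bar>Y'\<bar> < H" "Y' = \<beta> * Y + s" "0 < \<beta>"
  shows "\<bar>s\<bar> < (\<beta>+1)*H"
proof -
  have "\<bar>\<beta> * Y\<bar> = \<beta> * \<bar>Y\<bar>" using assms(4) by (simp add: abs_mult)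
  moreover have "\<beta> * \<bar>Y\<bar> \<le> \<beta> * H" using assms(1,4) by (intro mult_left_mono) auto
  moreover have "(\<beta>+1)*H = \<beta> * H + H" by (simp add: algebra_simps)
  moreover have "s = Y' - \<beta> * Y" using assms(3) by simp
  ultimately show ?thesis using assms(2) abs_triangle_ineq4[of Y' "\<beta> * Y"] by linarith
qed

lemma S_y_facts:
  assumes b: "1 < \<beta>" and bm: "\<beta> \<le> real m + 1" and eS: "e \<in> S_bm \<beta> m"
  defines "Y \<equiv> \<lambda>i. tv \<beta> e i - real m / (\<beta> - 1) / 2"
  shows "\<And>i. \<bar>Y i\<bar> < 1 - real m / (\<beta> - 1) / 2"
    "\<And>i. Y (Suc i) = \<beta> * Y i + (real m / 2 - real (e i))"
    "\<And>i. \<bar>real m / 2 - real (e i)\<bar> < (\<beta>+1) * (1 - real m / (\<beta> - 1) / 2)"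
proof -
  show Yb: "\<And>i. \<bar>Y i\<bar> < 1 - real m / (\<beta> - 1) / 2" unfolding Y_def by (rule S_to_y(2)[OF b bm eS])
  show Yr: "\<And>i. Y (Suc i) = \<beta> * Y i + (real m / 2 - real (e i))" unfolding Y_def by (rule S_to_y(3)[OF b bm eS])
  show "\<And>i. \<bar>real m / 2 - real (e i)\<bar> < (\<beta>+1) * (1 - real m / (\<beta> - 1) / 2)"
    using b by (intro step_bound[OF Yb Yb Yr]) auto
qed

lemma even_part1:
  fixes k :: nat
  assumes m: "m = 2*k" and k1: "1 \<le> k" and bk: "real k + 1 < \<beta>"
    and q: "\<beta>^2 - (real k+1)*\<beta> - real k \<le> 0"
  shows "S_bm \<beta> m = {\<lambda>_. k}"
proof -
  have b: "1 < \<beta>" using bk by simp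
  have bm: "\<beta> \<le> real m + 1"
  proof (rule ccontr)
    assume "\<not> \<beta> \<le> real m + 1"
    then have g: "real (2*k+1) < \<beta>" using m by simp
    have "\<beta>^2 - (real k+1)*\<beta> - real k = \<beta> * (\<beta> - real (2*k+1)) + real k * (\<beta> - 1)"
      by (simp add: algebra_simps power2_eq_square)
    moreover have "0 \<le> \<beta> * (\<beta> - real (2*k+1))" using g b by simp
    moreover have "0 < real k * (\<beta> - 1)" using k1 b by simp
    ultimately have "0 < \<beta>^2 - (real k+1)*\<beta> - real k" by (rule g_pos)
    then show False using q by simp
  qed
  define H where "H = 1 - real m / (\<beta> - 1) / 2"
  have H': "H = 1 - 2 * real k / (\<beta> - 1) / 2" unfolding H_def m by simp
  have E: "(\<beta>+1)*H \<le> 1" by (rule E1[OF b H' q])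
  have Hpos: "0 < H"
  proof -
    have "real m / (\<beta> - 1) < 2" using b bk m by (simp add: divide_less_eq)
    then show ?thesis unfolding H_def by (rule g_half)
  qed
  show ?thesis
  proof
    show "{\<lambda>_. k} \<subseteq> S_bm \<beta> m"
    proof -
      have "(\<lambda>_. k) \<in> S_bm \<beta> m"
      proof (rule mem_S_from_y[OF b bm, where y = "\<lambda>_. 0" and YB = 0])
        show "(\<lambda>_. k) \<in> digit_seqs m" using m by (simp add: digit_seqs_def)
        show "\<bar>(0::real)\<bar> \<le> 0" by simp
        show "0 < 1 - real m / (\<beta> - 1) / 2" using Hpos H_def by simp
        show "\<beta> * 0 + (real m / 2 - real k) = 0" for i :: nat using m by simp
      qed
      then show ?thesis by simp
    qed
    show "S_bm \<beta> m \<subseteq> {\<lambda>_. k}"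
    proof
      fix e assume eS: "e \<in> S_bm \<beta> m"
      have "e i = k" for i
      proof -
        have "\<bar>real m / 2 - real (e i)\<bar> < (\<beta>+1) * H"
          unfolding H_def by (rule S_y_facts(3)[OF b bm eS])
        then have "\<bar>real k - real (e i)\<bar> < 1" using E m by simp
        then have "real (e i) < real (k+1)" "real k < real (e i + 1)" by auto
        then have "e i < k+1" "k < e i + 1" by (simp_all only: of_nat_less_iff)
        then show ?thesis by simp
      qed
      then show "e \<in> {\<lambda>_. k}" by auto
    qed
  qed
qed

lemma odd_part1:
  fixes k :: nat
  assumes m: "m = 2*k+1" and k1: "1 \<le> k" and b: "1 < \<beta>"
    and qG: "\<beta>^2 - (real k+1)*\<beta> - (real k+1) > 0"
    and c: "\<beta>^3 - (real k+2)*\<beta>^2 + \<beta> - (real k+1) \<le> 0"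
  shows "S_bm \<beta> m = {(\<lambda>i. if even i then k+1 else k), (\<lambda>i. if even i then k else k+1)}"
proof -
  have bk2: "\<beta> \<le> 2 * real k + 2"
  proof (rule ccontr)
    assume "\<not> \<beta> \<le> 2 * real k + 2"
    then have g: "real k + 2 < \<beta>" by simp
    have "\<beta>^3 - (real k+2)*\<beta>^2 + \<beta> - (real k+1) = \<beta>^2 * (\<beta> - (real k + 2)) + (\<beta> - (real k + 1))"
      by (simp add: algebra_simps power2_eq_square power3_eq_cube)
    moreover have "0 \<le> \<beta>^2 * (\<beta> - (real k + 2))" using g by simp
    moreover have "0 < \<beta> - (real k + 1)" using g by simp
    ultimately have "0 < \<beta>^3 - (real k+2)*\<beta>^2 + \<beta> - (real k+1)" by (rule g_pos)
    then show False using c by simp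
  qed
  have bm: "\<beta> \<le> real m + 1" using bk2 m by simp
  define H where "H = 1 - real m / (\<beta> - 1) / 2"
  have H': "H = 1 - (2 * real k + 1) / (\<beta> - 1) / 2" unfolding H_def m by simp
  have K: "2*H*(\<beta>^2+1) \<le> \<beta>+1" by (rule K1[OF b H' c])
  have F1: "(\<beta>+1)*H \<le> 1" by (rule O1[OF b K])
  have F2: "H \<le> 1/2" by (rule O2[OF b H' bk2])
  have F3: "\<beta> * (\<beta> * H - 1/2) - 1/2 \<le> - H" by (rule O3[OF K])
  define P where "P = 1 / (2*(\<beta>+1))"
  have F4: "P < H" unfolding P_def by (rule O4[OF b H' qG])
  have Ppos: "0 < P" unfolding P_def using b by simp
  have PbP: "\<beta> * P = 1/2 - P" unfolding P_def using b by (simp add: field_simps)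
  have m2: "real m / 2 = real k + 1/2" using m by simp
  define a1 where "a1 = (\<lambda>i::nat. if even i then k+1 else k)"
  define a2 where "a2 = (\<lambda>i::nat. if even i then k else k+1)"
  have a1S: "a1 \<in> S_bm \<beta> m"
  proof (rule mem_S_from_y[OF b bm, where y = "\<lambda>i. if even i then P else -P" and YB = P])
    show "a1 \<in> digit_seqs m" using m by (simp add: digit_seqs_def a1_def)
    show "\<bar>if even i then P else -P\<bar> \<le> P" for i using Ppos by simp
    show "P < 1 - real m / (\<beta> - 1) / 2" using F4 H_def by simp
    show "\<beta> * (if even i then P else -P) + (real m / 2 - real (a1 i)) = (if even (Suc i) then P else -P)" for i
      using PbP m by (cases "even i") (auto simp: a1_def field_simps)
  qed
  have a2S: "a2 \<in> S_bm \<beta> m"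
  proof (rule mem_S_from_y[OF b bm, where y = "\<lambda>i. if even i then -P else P" and YB = P])
    show "a2 \<in> digit_seqs m" using m by (simp add: digit_seqs_def a2_def)
    show "\<bar>if even i then -P else P\<bar> \<le> P" for i using Ppos by simp
    show "P < 1 - real m / (\<beta> - 1) / 2" using F4 H_def by simp
    show "\<beta> * (if even i then -P else P) + (real m / 2 - real (a2 i)) = (if even (Suc i) then -P else P)" for i
      using PbP m by (cases "even i") (auto simp: a2_def field_simps)
  qed
  have sub: "S_bm \<beta> m \<subseteq> {a1, a2}"
  proof
    fix e assume eS: "e \<in> S_bm \<beta> m"
    define Y where "Y i = tv \<beta> e i - real m / (\<beta> - 1) / 2" for i
    have Yb: "\<bar>Y i\<bar> < H" for i unfolding Y_def H_def by (rule S_y_facts(1)[OF b bm eS])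
    have Yr: "Y (Suc i) = \<beta> * Y i + (real m / 2 - real (e i))" for i
      unfolding Y_def by (rule S_y_facts(2)[OF b bm eS])
    have dig: "e i = k \<or> e i = k+1" for i
    proof -
      have "\<bar>real m / 2 - real (e i)\<bar> < (\<beta>+1) * H"
        unfolding H_def by (rule S_y_facts(3)[OF b bm eS])
      then have "\<bar>real k + 1/2 - real (e i)\<bar> < 1" using F1 m2 by simp
      then have "real (e i) < real (k+2)" "real k < real (e i + 1)" by auto
      then have "e i < k+2" "k < e i + 1" by (simp_all only: of_nat_less_iff)
      then show ?thesis by auto
    qed
    have pos_dig: "e i = k+1" if "0 \<le> Y i" for i
    proof (rule ccontr)
      assume "e i \<noteq> k+1"
      then have "e i = k" using dig by blast
      then have "Y (Suc i) = \<beta> * Y i + 1/2" using Yr[of i] m2 by simp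
      moreover have "0 \<le> \<beta> * Y i" using that b by simp
      ultimately show False using Yb[of "Suc i"] F2 by simp
    qed
    have neg_dig: "e i = k" if "Y i \<le> 0" for i
    proof (rule ccontr)
      assume "e i \<noteq> k"
      then have "e i = k+1" using dig by blast
      then have "Y (Suc i) = \<beta> * Y i - 1/2" using Yr[of i] m2 by simp
      moreover have "\<beta> * Y i \<le> 0" using that b by (simp add: mult_nonneg_nonpos)
      ultimately show False using Yb[of "Suc i"] F2 by simp
    qed
    have nz: "Y i \<noteq> 0" for i using pos_dig[of i] neg_dig[of i] by auto
    have alt_pos: "Y (Suc i) < 0" if "0 < Y i" for i
    proof (rule ccontr)
      assume "\<not> Y (Suc i) < 0"
      then have p1: "0 < Y (Suc i)" using nz[of "Suc i"] by simp
      have "Y (Suc i) = \<beta> * Y i - 1/2" using Yr[of i] pos_dig[of i] that m2 by simp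
      moreover have "\<beta> * Y i < \<beta> * H" using that Yb[of i] b by simp
      ultimately have l1: "Y (Suc i) < \<beta> * H - 1/2" by simp
      have "Y (Suc (Suc i)) = \<beta> * Y (Suc i) - 1/2" using Yr[of "Suc i"] pos_dig[of "Suc i"] p1 m2 by simp
      moreover have "\<beta> * Y (Suc i) < \<beta> * (\<beta> * H - 1/2)" using l1 b by simp
      ultimately have "Y (Suc (Suc i)) < - H" using F3 by simp
      then show False using Yb[of "Suc (Suc i)"] by simp
    qed
    have alt_neg: "0 < Y (Suc i)" if "Y i < 0" for i
    proof (rule ccontr)
      assume "\<not> 0 < Y (Suc i)"
      then have p1: "Y (Suc i) < 0" using nz[of "Suc i"] by simp
      have "Y (Suc i) = \<beta> * Y i + 1/2" using Yr[of i] neg_dig[of i] that m2 by simp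
      moreover have "\<beta> * Y i > - (\<beta> * H)"
      proof -
        have "\<beta> * (- Y i) < \<beta> * H" using that Yb[of i] b by (intro mult_strict_left_mono) auto
        then show ?thesis by simp
      qed
      ultimately have l1: "Y (Suc i) > - (\<beta> * H - 1/2)" by simp
      have "Y (Suc (Suc i)) = \<beta> * Y (Suc i) + 1/2" using Yr[of "Suc i"] neg_dig[of "Suc i"] p1 m2 by simp
      moreover have "\<beta> * Y (Suc i) > - (\<beta> * (\<beta> * H - 1/2))"
      proof -
        have "\<beta> * (- (\<beta> * H - 1/2)) < \<beta> * Y (Suc i)" using l1 b by (intro mult_strict_left_mono) auto
        moreover have "\<beta> * (- (\<beta> * H - 1/2)) = - (\<beta> * (\<beta> * H - 1/2))" by (rule mult_minus_right)
        ultimately show ?thesis by linarith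
      qed
      ultimately have "Y (Suc (Suc i)) > H" using F3 by simp
      then show False using Yb[of "Suc (Suc i)"] by simp
    qed
    show "e \<in> {a1, a2}"
    proof (cases "0 < Y 0")
      case True
      have sgn: "(even i \<longrightarrow> 0 < Y i) \<and> (odd i \<longrightarrow> Y i < 0)" for i
      proof (induction i)
        case 0 then show ?case using True by simp
      next
        case (Suc i)
        show ?case
        proof (cases "even i")
          case True
          then have "0 < Y i" using Suc.IH by blast
          then have "Y (Suc i) < 0" by (rule alt_pos)
          then show ?thesis using True by simp
        next
          case False
          then have "Y i < 0" using Suc.IH by blast
          then have "0 < Y (Suc i)" by (rule alt_neg)
          then show ?thesis using False by simp
        qed
      qed
      then have "e i = a1 i" for i
      proof (cases "even i")
        case True
        then have "0 < Y i" using sgn[of i] by blast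
        then have "e i = k+1" using pos_dig[of i] by simp
        then show ?thesis using True by (simp add: a1_def)
      next
        case False
        then have "Y i < 0" using sgn[of i] by blast
        then have "e i = k" using neg_dig[of i] by simp
        then show ?thesis using False by (simp add: a1_def)
      qed
      then show ?thesis by auto
    next
      case False
      then have "Y 0 < 0" using nz[of 0] by simp
      have sgn: "(even i \<longrightarrow> Y i < 0) \<and> (odd i \<longrightarrow> 0 < Y i)" for i
      proof (induction i)
        case 0 then show ?case using \<open>Y 0 < 0\<close> by simp
      next
        case (Suc i)
        show ?case
        proof (cases "even i")
          case True
          then have "Y i < 0" using Suc.IH by blast
          then have "0 < Y (Suc i)" by (rule alt_neg)
          then show ?thesis using True by simp
        next
          case False
          then have "0 < Y i" using Suc.IH by blast
          then have "Y (Suc i) < 0" by (rule alt_pos)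
          then show ?thesis using False by simp
        qed
      qed
      then have "e i = a2 i" for i
      proof (cases "even i")
        case True
        then have "Y i < 0" using sgn[of i] by blast
        then have "e i = k" using neg_dig[of i] by simp
        then show ?thesis using True by (simp add: a2_def)
      next
        case False
        then have "0 < Y i" using sgn[of i] by blast
        then have "e i = k+1" using pos_dig[of i] by simp
        then show ?thesis using False by (simp add: a2_def)
      qed
      then show ?thesis by auto
    qed
  qed
  have "S_bm \<beta> m = {a1, a2}" using sub a1S a2S by blast
  then show ?thesis by (simp only: a1_def a2_def)
qed

lemma div_pow_le:
  fixes q \<beta> :: real assumes "0 \<le> q" "1 \<le> \<beta>" shows "q / \<beta> ^ j \<le> q"
proof -
  have "1 \<le> \<beta> ^ j" using assms(2) by (rule one_le_power)
  then have "q * 1 \<le> q * \<beta> ^ j" using assms(1) by (intro mult_left_mono) auto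
  then show ?thesis using \<open>1 \<le> \<beta> ^ j\<close> by (simp add: divide_le_eq)
qed

lemma div_pow_ge0:
  fixes q \<beta> :: real assumes "0 \<le> q" "1 \<le> \<beta>" shows "0 \<le> q / \<beta> ^ j"
  using assms by simp

lemma inj_infinite:
  fixes F :: "nat \<Rightarrow> 'a"
  assumes "inj F" "range F \<subseteq> S" shows "infinite S"
proof
  assume "finite S"
  then have "finite (range F)" using assms(2) finite_subset by blast
  then have "finite (UNIV :: nat set)" using assms(1) finite_imageD by blast
  then show False by simp
qed

lemma even_part2:
  fixes k :: nat
  assumes m: "m = 2*k" and k1: "1 \<le> k" and b: "1 < \<beta>" and bm: "\<beta> \<le> real m + 1"
    and q: "\<beta>^2 - (real k+1)*\<beta> - real k > 0"
  shows "infinite (S_bm \<beta> m)"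
proof -
  define H where "H = 1 - real m / (\<beta> - 1) / 2"
  have H': "H = 1 - 2 * real k / (\<beta> - 1) / 2" unfolding H_def m by simp
  define qq where "qq = 1 / (\<beta> + 1)"
  have qH: "qq < H" unfolding qq_def by (rule E2[OF b H' q])
  have q0: "0 < qq" unfolding qq_def using b by simp
  have qb: "\<beta> * qq = 1 - qq" unfolding qq_def using b by (simp add: field_simps)
  define F where "F n i = (if i < n then k else if even (i - n) then k+1 else k - 1)" for n i :: nat
  define y where "y n i = (if i < n then qq / \<beta> ^ (n - i) else if even (i - n) then qq else - qq)" for n i :: nat
  have mem: "F n \<in> S_bm \<beta> m" for n
  proof (rule mem_S_from_y[OF b bm, where y = "y n" and YB = qq])
    show "F n \<in> digit_seqs m" using m k1 by (auto simp: digit_seqs_def F_def)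
    show "\<bar>y n i\<bar> \<le> qq" for i
      using div_pow_le[of qq \<beta> "n - i"] div_pow_ge0[of qq \<beta> "n - i"] q0 b by (auto simp: y_def)
    show "qq < 1 - real m / (\<beta> - 1) / 2" using qH H_def by simp
    show "\<beta> * y n i + (real m / 2 - real (F n i)) = y n (Suc i)" for i
    proof -
      have mk: "real m / 2 = real k" using m by simp
      consider (a) "Suc i < n" | (b) "Suc i = n" | (c) "n \<le> i" by linarith
      then show ?thesis
      proof cases
        case a
        then have ni: "n - i = Suc (n - Suc i)" by simp
        have "\<beta> * (qq / \<beta> ^ (n - i)) = qq / \<beta> ^ (n - Suc i)"
          unfolding ni using b by (simp add: field_simps)
        then show ?thesis using a mk by (simp add: y_def F_def)
      next
        case b
        then show ?thesis using mk \<open>1 < \<beta>\<close> by (auto simp: y_def F_def)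
      next
        case c
        then have sn: "Suc i - n = Suc (i - n)" by simp
        show ?thesis
        proof (cases "even (i - n)")
          case True
          then show ?thesis using c sn mk qb by (simp add: y_def F_def)
        next
          case False
          have "real (k - 1) = real k - 1" using k1 by simp
          then show ?thesis using False c sn mk qb by (simp add: y_def F_def)
        qed
      qed
    qed
  qed
  have "inj F"
  proof (rule injI)
    fix a c assume eq: "F a = F c"
    show "a = c"
    proof (rule ccontr)
      assume "a \<noteq> c"
      then consider "a < c" | "c < a" by linarith
      then show False
      proof cases
        case 1
        have "F a a = k+1" "F c a = k" using 1 by (simp_all add: F_def)
        moreover have "F a a = F c a" using eq by simp
        ultimately show False by simp
      next
        case 2
        have "F c c = k+1" "F a c = k" using 2 by (simp_all add: F_def)
        moreover have "F a c = F c c" using eq by simp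
        ultimately show False by simp
      qed
    qed
  qed
  moreover have "range F \<subseteq> S_bm \<beta> m" using mem by auto
  ultimately show ?thesis by (rule inj_infinite)
qed

lemma g_lin: fixes B c w w' s c' :: real shows "B*w = w' \<Longrightarrow> B*c + s = c' \<Longrightarrow> B*(c+w) + s = c' + w'"
  by (simp add: algebra_simps)

lemma odd_part2:
  fixes k :: nat
  assumes m: "m = 2*k+1" and k1: "1 \<le> k" and b: "1 < \<beta>" and bm: "\<beta> \<le> real m + 1"
    and c: "\<beta>^3 - (real k+2)*\<beta>^2 + \<beta> - (real k+1) > 0"
  shows "infinite (S_bm \<beta> m)"
proof -
  define H where "H = 1 - real m / (\<beta> - 1) / 2"
  have H': "H = 1 - (2 * real k + 1) / (\<beta> - 1) / 2" unfolding H_def m by simp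
  define a where "a = (1+\<beta>) / (2*(1+\<beta>^2))"
  define b0 where "b0 = (\<beta> - 1) / (2*(1+\<beta>^2))"
  define P where "P = 1 / (2*(\<beta>+1))"
  have aH: "a < H" unfolding a_def by (rule O5[OF K2[OF b H' c]])
  have den: "0 < 2*(1+\<beta>^2)" by (simp add: add_pos_nonneg)
  have ab: "\<beta> * a - 1/2 = b0" unfolding a_def b0_def using den
    by (simp add: field_simps power2_eq_square)
  have ba: "\<beta> * b0 - 1/2 = - a" unfolding a_def b0_def using den
    by (simp add: field_simps power2_eq_square)
  have PbP: "\<beta> * P - 1/2 = - P" unfolding P_def using b by (simp add: field_simps)
  have P0: "0 < P" unfolding P_def using b by simp
  have b00: "0 < b0" unfolding b0_def using b den by simp
  have b0a: "b0 \<le> a" unfolding a_def b0_def using den by (simp add: divide_right_mono)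
  have Pa: "P < a"
  proof -
    have "1 + \<beta>^2 < (1+\<beta>)^2" using b by (simp add: power2_eq_square algebra_simps)
    then have "1 / (2*(\<beta>+1)) < (1+\<beta>) / (2*(1+\<beta>^2))" using b den
      by (simp add: field_simps power2_eq_square)
    then show ?thesis unfolding P_def a_def .
  qed
  have mk1: "real m / 2 - real (k+1) = - 1/2" "real m / 2 - real k = 1/2" using m by (simp_all add: field_simps)
  define cyc where "cyc r = (if r = (0::nat) then a else if r = 1 then b0 else if r = 2 then -a else -b0)" for r
  define A where "A n i = (if i < 2*n then (if even i then k+1 else k)
                          else (if (i - 2*n) mod 4 < 2 then k+1 else k))" for n i :: nat
  define y where "y n i = (if i \<le> 2*n then (if even i then P else -P) + (a - P) / \<beta> ^ (2*n - i)
                          else cyc ((i - 2*n) mod 4))" for n i :: nat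
  have ycyc: "y n i = cyc ((i - 2*n) mod 4)" if "2*n \<le> i" for n i
  proof (cases "i = 2*n")
    case True then show ?thesis by (simp add: y_def cyc_def)
  next
    case False then show ?thesis using that by (simp add: y_def)
  qed
  have mem: "A n \<in> S_bm \<beta> m" for n
  proof (rule mem_S_from_y[OF b bm, where y = "y n" and YB = a])
    show "A n \<in> digit_seqs m" using m by (auto simp: digit_seqs_def A_def)
    show "\<bar>y n i\<bar> \<le> a" for i
    proof (cases "i \<le> 2*n")
      case True
      have w0: "0 \<le> (a - P) / \<beta> ^ (2*n - i)" using Pa b by simp
      have w1: "(a - P) / \<beta> ^ (2*n - i) \<le> a - P" using Pa b by (intro div_pow_le) auto
      show ?thesis using True w0 w1 P0 Pa by (auto simp: y_def)
    next
      case False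
      then have "y n i = cyc ((i - 2*n) mod 4)" by (intro ycyc) auto
      then show ?thesis using b00 b0a aH P0 Pa by (auto simp: cyc_def)
    qed
    show "a < 1 - real m / (\<beta> - 1) / 2" using aH H_def by simp
    show "\<beta> * y n i + (real m / 2 - real (A n i)) = y n (Suc i)" for i
    proof (cases "i < 2*n")
      case True
      define j where "j = 2*n - Suc i"
      have ij: "2*n - i = Suc j" using True unfolding j_def by simp
      have sj: "2*n - Suc i = j" unfolding j_def by simp
      have w: "\<beta> * ((a - P) / \<beta> ^ (2*n - i)) = (a - P) / \<beta> ^ j"
        unfolding ij using b by (simp add: field_simps)
      have yi: "y n i = (if even i then P else -P) + (a - P) / \<beta> ^ (2*n - i)" using True by (simp add: y_def)
      have yS: "y n (Suc i) = (if even (Suc i) then P else -P) + (a - P) / \<beta> ^ j" using True sj by (simp add: y_def)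
      show ?thesis
      proof (cases "even i")
        case True
        have "A n i = k+1" using \<open>i < 2*n\<close> True by (simp add: A_def)
        then have cc: "\<beta> * P + (real m / 2 - real (A n i)) = - P" using mk1 PbP by simp
        have yi': "y n i = P + (a - P) / \<beta> ^ (2*n - i)" using yi True by simp
        have yS': "y n (Suc i) = - P + (a - P) / \<beta> ^ j" using yS True by simp
        show ?thesis unfolding yi' yS' by (rule g_lin[OF w cc])
      next
        case False
        have "A n i = k" using \<open>i < 2*n\<close> False by (simp add: A_def)
        then have cc: "\<beta> * (-P) + (real m / 2 - real (A n i)) = P" using mk1 PbP by simp
        have yi': "y n i = - P + (a - P) / \<beta> ^ (2*n - i)" using yi False by simp
        have yS': "y n (Suc i) = P + (a - P) / \<beta> ^ j" using yS False by simp
        show ?thesis unfolding yi' yS' by (rule g_lin[OF w cc])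
      qed
    next
      case False
      define r where "r = (i - 2*n) mod 4"
      have r4: "r < 4" unfolding r_def by simp
      have rS: "(Suc i - 2*n) mod 4 = (Suc r) mod 4" using False unfolding r_def by (simp add: Suc_diff_le mod_Suc_eq)
      have yi: "y n i = cyc r" unfolding r_def using False by (intro ycyc) auto
      have yS: "y n (Suc i) = cyc ((Suc r) mod 4)" using False rS by (subst ycyc) auto
      have Ai: "A n i = (if r < 2 then k+1 else k)" using False unfolding r_def by (simp add: A_def)
      consider "r = 0" | "r = 1" | "r = 2" | "r = 3" using r4 by linarith
      then show ?thesis
      proof cases
        case 1 then show ?thesis using yi yS Ai mk1 ab by (simp add: cyc_def)
      next
        case 2 then show ?thesis using yi yS Ai mk1 ba by (simp add: cyc_def)
      next
        case 3 then show ?thesis using yi yS Ai mk1 ab by (simp add: cyc_def algebra_simps)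
      next
        case 4 then show ?thesis using yi yS Ai mk1 ba by (simp add: cyc_def algebra_simps)
      qed
    qed
  qed
  have "inj A"
  proof (rule injI)
    fix p q assume eq: "A p = A q"
    have key: "A u (2*u+1) \<noteq> A v (2*u+1)" if "u < v" for u v
    proof -
      have "A u (2*u+1) = k+1" by (simp add: A_def)
      moreover have "A v (2*u+1) = k" using that by (simp add: A_def)
      ultimately show ?thesis by simp
    qed
    show "p = q"
    proof (rule ccontr)
      assume "p \<noteq> q"
      then consider "p < q" | "q < p" by linarith
      then show False
      proof cases
        case 1 then show False using key[of p q] eq by simp
      next
        case 2 then show False using key[of q p] eq by simp
      qed
    qed
  qed
  moreover have "range A \<subseteq> S_bm \<beta> m" using mem by auto
  ultimately show ?thesis by (rule inj_infinite)
qed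

lemma sq_id: fixes \<beta> k :: real
  shows "(2*\<beta> - (k+1))^2 - (k^2 + 6*k + 1) = 4 * (\<beta>^2 - (k+1)*\<beta> - k)"
    "(2*\<beta> - (k+1))^2 - (k^2 + 6*k + 5) = 4 * (\<beta>^2 - (k+1)*\<beta> - (k+1))"
  by (simp_all add: algebra_simps power2_eq_square)

lemma g_sq_le: fixes X Y D Q :: real shows "X \<le> Y \<Longrightarrow> X - D = 4*Q \<Longrightarrow> Y = D \<Longrightarrow> Q \<le> 0" by simp
lemma g_sq_lt: fixes X Y D Q :: real shows "Y < X \<Longrightarrow> X - D = 4*Q \<Longrightarrow> Y = D \<Longrightarrow> 0 < Q" by simp

lemma sqrt_ge: fixes k :: real assumes "0 \<le> k" "(k+1)^2 \<le> D" shows "k + 1 \<le> sqrt D"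
proof -
  have "sqrt ((k+1)^2) \<le> sqrt D" using assms(2) by (rule real_sqrt_le_mono)
  then show ?thesis using assms(1) by simp
qed

lemma bf_even_le:
  fixes \<beta> k :: real
  assumes k: "0 \<le> k" and le: "\<beta> \<le> (k + 1 + sqrt (k^2 + 6*k + 1)) / 2" and gt: "k + 1 < \<beta>"
  shows "\<beta>^2 - (k+1)*\<beta> - k \<le> 0"
proof -
  define s where "s = sqrt (k^2 + 6*k + 1)"
  have D0: "0 \<le> k^2 + 6*k + 1" using k by (intro add_nonneg_nonneg) auto
  have s2: "s^2 = k^2 + 6*k + 1" unfolding s_def using D0 by simp
  have "2*\<beta> - (k+1) \<le> s" using le unfolding s_def by simp
  moreover have "0 \<le> 2*\<beta> - (k+1)" using gt k by simp
  ultimately have "(2*\<beta> - (k+1))^2 \<le> s^2" by (rule power_mono)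
  then show ?thesis using g_sq_le sq_id(1) s2 by blast
qed

lemma bf_even_gt:
  fixes \<beta> k :: real
  assumes k: "0 \<le> k" and gt: "(k + 1 + sqrt (k^2 + 6*k + 1)) / 2 < \<beta>"
  shows "\<beta>^2 - (k+1)*\<beta> - k > 0" "k + 1 < \<beta>"
proof -
  define s where "s = sqrt (k^2 + 6*k + 1)"
  have D0: "0 \<le> k^2 + 6*k + 1" using k by (intro add_nonneg_nonneg) auto
  have s2: "s^2 = k^2 + 6*k + 1" unfolding s_def using D0 by simp
  have s0: "0 \<le> s" unfolding s_def using D0 by simp
  have sk: "k + 1 \<le> s" unfolding s_def using k by (intro sqrt_ge) (auto simp: power2_eq_square algebra_simps)
  have l: "s < 2*\<beta> - (k+1)" using gt unfolding s_def by simp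
  then have "s^2 < (2*\<beta> - (k+1))^2" using s0 by (intro power_strict_mono) auto
  then show "\<beta>^2 - (k+1)*\<beta> - k > 0" using g_sq_lt sq_id(1) s2 by blast
  show "k + 1 < \<beta>" using l sk by simp
qed

lemma G_odd_gt:
  fixes \<beta> k :: real
  assumes k: "0 \<le> k" and gt: "(k + 1 + sqrt (k^2 + 6*k + 5)) / 2 < \<beta>"
  shows "\<beta>^2 - (k+1)*\<beta> - (k+1) > 0" "k + 1 < \<beta>"
proof -
  define s where "s = sqrt (k^2 + 6*k + 5)"
  have D0: "0 \<le> k^2 + 6*k + 5" using k by (intro add_nonneg_nonneg) auto
  have s2: "s^2 = k^2 + 6*k + 5" unfolding s_def using D0 by simp
  have s0: "0 \<le> s" unfolding s_def using D0 by simp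
  have sk: "k + 1 \<le> s" unfolding s_def using k by (intro sqrt_ge) (auto simp: power2_eq_square algebra_simps)
  have l: "s < 2*\<beta> - (k+1)" using gt unfolding s_def by simp
  then have "s^2 < (2*\<beta> - (k+1))^2" using s0 by (intro power_strict_mono) auto
  then show "\<beta>^2 - (k+1)*\<beta> - (k+1) > 0" using g_sq_lt sq_id(2) s2 by blast
  show "k + 1 < \<beta>" using l sk by simp
qed

lemma g_sum3: fixes Q A B C :: real shows "Q = A + B + C \<Longrightarrow> 0 \<le> A \<Longrightarrow> 0 \<le> B \<Longrightarrow> 0 < C \<Longrightarrow> 0 < Q" by simp
lemma g_sum2: fixes Q A B :: real shows "Q = A + B \<Longrightarrow> A \<le> 0 \<Longrightarrow> B < 0 \<Longrightarrow> Q < 0" by simp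

lemma cubic_facts:
  fixes k :: real
  assumes k1: "1 \<le> k"
  defines "p \<equiv> \<lambda>x::real. x^3 - (k+2)*x^2 + x - (k+1)"
  shows "\<exists>r. {x. p x = 0} = {r} \<and> (\<forall>x. p x \<le> 0 \<longleftrightarrow> x \<le> r) \<and> k + 1 < r"
proof -
  have neg: "p x < 0" if "x \<le> k+1" for x
  proof (cases "x = k+1")
    case True
    have "p x = - ((k+1)^2)" unfolding p_def True by (simp add: algebra_simps power2_eq_square power3_eq_cube)
    moreover have "0 < (k+1)^2" using k1 by simp
    ultimately show ?thesis by simp
  next
    case False
    then have xl: "x < k+1" using that by simp
    have "p x = x^2 * (x - (k+2)) + (x - (k+1))" unfolding p_def
      by (simp add: algebra_simps power2_eq_square power3_eq_cube)
    moreover have "x^2 * (x - (k+2)) \<le> 0" using xl by (intro mult_nonneg_nonpos) auto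
    moreover have "x - (k+1) < 0" using xl by simp
    ultimately show ?thesis by (rule g_sum2)
  qed
  have mono: "p x < p y" if "k+1 \<le> x" "x < y" for x y
  proof -
    have "p y - p x = (y - x) * (y*(y-(k+1)) + x*(x-(k+1)) + (x-1)*(y-1))" unfolding p_def
      by (simp add: algebra_simps power2_eq_square power3_eq_cube)
    moreover have "0 < y*(y-(k+1)) + x*(x-(k+1)) + (x-1)*(y-1)"
    proof (rule g_sum3[OF refl])
      show "0 \<le> y*(y-(k+1))" using that k1 by (intro mult_nonneg_nonneg) auto
      show "0 \<le> x*(x-(k+1))" using that k1 by (intro mult_nonneg_nonneg) auto
      show "0 < (x-1)*(y-1)" using that k1 by (intro mult_pos_pos) auto
    qed
    moreover have "0 < y - x" using that by simp
    ultimately have "0 < p y - p x" by simp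
    then show ?thesis by simp
  qed
  have pk2: "p (k+2) = 1" unfolding p_def by (simp add: algebra_simps power2_eq_square power3_eq_cube)
  have "\<exists>r. k+1 \<le> r \<and> r \<le> k+2 \<and> p r = 0"
  proof (rule IVT)
    show "p (k+1) \<le> 0" using neg[of "k+1"] by simp
    show "0 \<le> p (k+2)" using pk2 by simp
    show "k + 1 \<le> k + 2" by simp
    show "\<forall>x. k + 1 \<le> x \<and> x \<le> k + 2 \<longrightarrow> isCont p x" unfolding p_def by (intro allI impI continuous_intros)
  qed
  then obtain r where r: "k+1 \<le> r" "p r = 0" by blast
  have rgt: "k + 1 < r" using r neg[of r] by (cases "r = k+1") auto
  have set: "{x. p x = 0} = {r}"
  proof
    show "{r} \<subseteq> {x. p x = 0}" using r by simp
    show "{x. p x = 0} \<subseteq> {r}"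
    proof
      fix x assume "x \<in> {x. p x = 0}"
      then have px: "p x = 0" by simp
      then have xk: "k + 1 < x" using neg[of x] by (cases "x \<le> k+1") auto
      have "\<not> x < r" using mono[of x r] xk px r by auto
      moreover have "\<not> r < x" using mono[of r x] rgt px r by auto
      ultimately show "x \<in> {r}" by simp
    qed
  qed
  have char: "p x \<le> 0 \<longleftrightarrow> x \<le> r" for x
  proof
    assume "p x \<le> 0"
    show "x \<le> r"
    proof (rule ccontr)
      assume "\<not> x \<le> r"
      then have "p r < p x" using mono[of r x] rgt by simp
      then show False using \<open>p x \<le> 0\<close> r by simp
    qed
  next
    assume xr: "x \<le> r"
    show "p x \<le> 0"
    proof (cases "x \<le> k+1")
      case True then show ?thesis using neg[of x] by simp
    next
      case False
      then show ?thesis using mono[of x r] xr r by (cases "x = r") auto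
    qed
  qed
  show ?thesis using set char rgt by blast
qed

theorem proposition4p7:
  fixes m :: nat
  assumes "m \<ge> 2"
  shows "(\<forall>\<beta>. G_m m < \<beta> \<and> \<beta> \<le> beta_f m \<longrightarrow>
            card (S_bm \<beta> m) = (if even m then 1 else 2))
       \<and> (\<forall>\<beta>. beta_f m < \<beta> \<and> \<beta> \<le> real m + 1 \<longrightarrow> infinite (S_bm \<beta> m))"
proof (cases "even m")
  case True
  define k where "k = m div 2"
  have m: "m = 2*k" using True unfolding k_def by simp
  have k1: "1 \<le> k" using assms m by simp
  have kr: "0 \<le> real k" by simp
  have G: "G_m m = real k + 1" using True by (simp add: G_m_def k_def)
  have bf: "beta_f m = (real k + 1 + sqrt ((real k)^2 + 6*real k + 1)) / 2"
    using True by (simp add: beta_f_def k_def Let_def)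
  show ?thesis
  proof (intro conjI allI impI)
    fix \<beta> assume h: "G_m m < \<beta> \<and> \<beta> \<le> beta_f m"
    have gt: "real k + 1 < \<beta>" using h G by simp
    have q: "\<beta>^2 - (real k+1)*\<beta> - real k \<le> 0" using bf_even_le[OF kr _ gt] h bf by simp
    have "S_bm \<beta> m = {\<lambda>_. k}" by (rule even_part1[OF m k1 gt q])
    then show "card (S_bm \<beta> m) = (if even m then 1 else 2)" using True by simp
  next
    fix \<beta> assume h: "beta_f m < \<beta> \<and> \<beta> \<le> real m + 1"
    have q: "\<beta>^2 - (real k+1)*\<beta> - real k > 0" and gt: "real k + 1 < \<beta>"
      using bf_even_gt[OF kr] h bf by auto
    show "infinite (S_bm \<beta> m)"
      by (rule even_part2[OF m k1 _ _ q]) (use h gt in auto)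
  qed
next
  case False
  define k where "k = m div 2"
  have m: "m = 2*k+1" using False unfolding k_def by simp
  have k1: "1 \<le> k" using assms m by simp
  have kr: "0 \<le> real k" by simp
  have kr1: "1 \<le> real k" using k1 by simp
  have G: "G_m m = (real k + 1 + sqrt ((real k)^2 + 6*real k + 5)) / 2"
    using False by (simp add: G_m_def k_def Let_def)
  obtain r where r: "{x. x^3 - (real k+2)*x^2 + x - (real k+1) = 0} = {r}"
    "\<forall>x. x^3 - (real k+2)*x^2 + x - (real k+1) \<le> 0 \<longleftrightarrow> x \<le> r" "real k + 1 < r"
    using cubic_facts[OF kr1] by blast
  have bf: "beta_f m = r" using False r(1) by (simp add: beta_f_def k_def Let_def)
  show ?thesis
  proof (intro conjI allI impI)
    fix \<beta> assume h: "G_m m < \<beta> \<and> \<beta> \<le> beta_f m"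
    have qG: "\<beta>^2 - (real k+1)*\<beta> - (real k+1) > 0" and gt: "real k + 1 < \<beta>"
      using G_odd_gt[OF kr] h G by auto
    have c: "\<beta>^3 - (real k+2)*\<beta>^2 + \<beta> - (real k+1) \<le> 0" using r(2) h bf by simp
    have b: "1 < \<beta>" using gt by simp
    have S: "S_bm \<beta> m = {(\<lambda>i. if even i then k+1 else k), (\<lambda>i. if even i then k else k+1)}"
      by (rule odd_part1[OF m k1 b qG c])
    have ne: "(\<lambda>i::nat. if even i then k+1 else k) \<noteq> (\<lambda>i. if even i then k else k+1)"
    proof
      assume "(\<lambda>i::nat. if even i then k+1 else k) = (\<lambda>i. if even i then k else k+1)"
      then have "(if even (0::nat) then k+1 else k) = (if even (0::nat) then k else k+1)" by metis
      then show False by simp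
    qed
    show "card (S_bm \<beta> m) = (if even m then 1 else 2)" using False S ne by simp
  next
    fix \<beta> assume h: "beta_f m < \<beta> \<and> \<beta> \<le> real m + 1"
    have c: "\<beta>^3 - (real k+2)*\<beta>^2 + \<beta> - (real k+1) > 0" using r(2) h bf by (simp add: not_le[symmetric])
    have b: "1 < \<beta>" using h bf r(3) by simp
    show "infinite (S_bm \<beta> m)"
      by (rule odd_part2[OF m k1 b _ c]) (use h in auto)
  qed
qed

end
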